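(* Let $k,l,r$ be integers with $k\ge 3$, $l\ge 2$, $r\ge 2$, and let $c>0$ be real. Then there exists $n_0=n_0(c,k,l,r)$ such that every linear $r$-uniform hypergraph $H$ on $n\ge n_0$ vertices with $$\rho(H)\ge \frac{n}{r-1}\left(1-\frac{1}{k-1}+c\right)$$ contains a copy of $K_k(l,\ldots,l)^{r}$.
   Context: An $r$-uniform hypergraph is linear if any two distinct edges share at most one vertex. $\rho(H)$ is the spectral radius of the adjacency tensor $\mathcal{A}(H)$, the order-$r$ dimension-$n$ tensor with entry $\frac{1}{(r-1)!}$ at $(i_1,\dots,i_r)$ if $\{v_{i_1},\dots,v_{i_r}\}\in E(H)$ and $0$ otherwise; eigenvalues $\lambda$ are defined by $\sum_{i_2,\dots,i_r}a_{ii_2\cdots i_r}x_{i_2}\cdots x_{i_r}=\lambda x_i^{r-1}$ for all $i$ with $x\neq 0$, and $\rho$ is the maximum modulus of eigenvalues. $K_k(l,\ldots,l)$ is the complete $k$-partite graph with all $k$ parts of size $l$. For a graph $F$, its $r$-expansion $F^r$ is obtained by adding to each edge $e$ a set $S_e$ of $r-2$ new vertices (pairwise disjoint and disjoint from $V(F)$), with edges $e\cup S_e$. "Contains" means as a not necessarily induced subhypergraph. *)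

theory Defs
  imports Complex_Main
begin

definition uniform_hypergraph :: "nat \<Rightarrow> 'a set \<Rightarrow> 'a set set \<Rightarrow> bool" where
  "uniform_hypergraph r V E \<longleftrightarrow> finite V \<and> (\<forall>e\<in>E. e \<subseteq> V \<and> card e = r)"

definition linear_hypergraph :: "'a set set \<Rightarrow> bool" where
  "linear_hypergraph E \<longleftrightarrow> (\<forall>e\<in>E. \<forall>f\<in>E. e \<noteq> f \<longrightarrow> card (e \<inter> f) \<le> 1)"

text \<open>Entry of the adjacency tensor of an r-uniform hypergraph at index (i, i_2, ..., i_r),
  the tail (i_2,...,i_r) being given as a list.\<close>
definition adj_entry :: "nat \<Rightarrow> 'a set set \<Rightarrow> 'a \<Rightarrow> 'a list \<Rightarrow> real" where
  "adj_entry r E i ys = (if set (i # ys) \<in> E then 1 / fact (r - 1) else 0)"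

definition tensor_eigenvalue :: "nat \<Rightarrow> 'a set \<Rightarrow> 'a set set \<Rightarrow> complex \<Rightarrow> bool" where
  "tensor_eigenvalue r V E lam \<longleftrightarrow>
     (\<exists>x :: 'a \<Rightarrow> complex. (\<exists>v\<in>V. x v \<noteq> 0) \<and>
        (\<forall>i\<in>V. (\<Sum>ys\<in>{ys. set ys \<subseteq> V \<and> length ys = r - 1}.
                   complex_of_real (adj_entry r E i ys) * prod_list (map x ys))
                 = lam * x i ^ (r - 1)))"

definition spectral_radius_hg :: "nat \<Rightarrow> 'a set \<Rightarrow> 'a set set \<Rightarrow> real" where
  "spectral_radius_hg r V E = Sup {cmod lam | lam. tensor_eigenvalue r V E lam}"

text \<open>Complete k-partite graph K_k(l,...,l): vertices (part, index).\<close>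
definition Kkl_verts :: "nat \<Rightarrow> nat \<Rightarrow> (nat \<times> nat) set" where
  "Kkl_verts k l = {0..<k} \<times> {0..<l}"

definition Kkl_edges :: "nat \<Rightarrow> nat \<Rightarrow> (nat \<times> nat) set set" where
  "Kkl_edges k l = {{(i, a), (j, b)} | i a j b. i < k \<and> j < k \<and> a < l \<and> b < l \<and> i \<noteq> j}"

text \<open>r-expansion of a graph (W, F): each edge e gets r-2 new vertices Inr (e, j), j < r-2.\<close>
definition expansion_verts :: "nat \<Rightarrow> 'b set \<Rightarrow> 'b set set \<Rightarrow> ('b + 'b set \<times> nat) set" where
  "expansion_verts r W F = Inl ` W \<union> {Inr (e, j) | e j. e \<in> F \<and> j < r - 2}"

definition expansion_edges :: "nat \<Rightarrow> 'b set set \<Rightarrow> ('b + 'b set \<times> nat) set set" where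
  "expansion_edges r F = {Inl ` e \<union> {Inr (e, j) | j. j < r - 2} | e. e \<in> F}"

definition contains_hg :: "'a set \<Rightarrow> 'a set set \<Rightarrow> 'c set \<Rightarrow> 'c set set \<Rightarrow> bool" where
  "contains_hg V E V' E' \<longleftrightarrow>
     (\<exists>f. inj_on f V' \<and> f ` V' \<subseteq> V \<and> (\<forall>e\<in>E'. f ` e \<in> E))"

end

theory Submission
  imports Defs "HOL-Analysis.Analysis"
begin

definition shnb :: "nat set set \<Rightarrow> nat \<Rightarrow> nat set" where
  "shnb E i = {j. j \<noteq> i \<and> (\<exists>e\<in>E. i \<in> e \<and> j \<in> e)}"

lemma cmod_prod_list: "cmod (prod_list (map x ys)) = prod_list (map (\<lambda>i. cmod (x i)) ys)"
  by (induction ys) (auto simp: norm_mult)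

lemma amgm_set:
  fixes y :: "nat \<Rightarrow> real"
  assumes "finite S" "card S = m" "m > 0" "\<And>i. 0 \<le> y i"
  shows "prod y S \<le> (\<Sum>i\<in>S. y i ^ m) / real m"
proof -
  have Sne: "S \<noteq> {}" using assms by auto
  have "(\<Sum>i\<in>S. y i ^ m / card S) \<ge> (\<Prod>i\<in>S. y i ^ m) powr (1 / card S)"
    by (rule arith_geom_mean) (use assms Sne in auto)
  hence ge: "(\<Sum>i\<in>S. y i ^ m) / real m \<ge> ((prod y S) ^ m) powr (1 / real m)"
    using assms by (simp add: sum_divide_distrib prod_power_distrib)
  have pnn: "prod y S \<ge> 0" using assms by (simp add: prod_nonneg)
  show ?thesis
  proof (cases "prod y S = 0")
    case True
    have "0 \<le> (\<Sum>i\<in>S. y i ^ m) / real m" using assms by (simp add: sum_nonneg)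
    thus ?thesis using True by simp
  next
    case False
    hence pos: "prod y S > 0" using pnn by simp
    have "((prod y S) ^ m) powr (1 / real m) = ((prod y S) powr (real m)) powr (1 / real m)"
      using pos by (simp add: powr_realpow)
    also have "\<dots> = prod y S" using assms pos by (simp add: powr_powr)
    finally show ?thesis using ge by simp
  qed
qed

lemma spec_to_graph:
  fixes V :: "nat set" and E :: "nat set set" and lam :: complex and r :: nat
  assumes U: "uniform_hypergraph r V E" and Lin: "linear_hypergraph E" and r2: "r \<ge> 2"
    and ev: "tensor_eigenvalue r V E lam"
  shows "\<exists>w::nat\<Rightarrow>real. (\<forall>i. 0 \<le> w i) \<and> (\<exists>i\<in>V. w i > 0) \<and>
           (\<forall>i\<in>V. real (r - 1) * cmod lam * w i \<le> sum w (shnb E i))"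
proof -
  define m where "m = r - 1"
  have mpos: "m > 0" using r2 m_def by simp
  have rm: "r = Suc m" using r2 m_def by simp
  have finV: "finite V" and Esub: "\<And>e. e \<in> E \<Longrightarrow> e \<subseteq> V" and Ecard: "\<And>e. e \<in> E \<Longrightarrow> card e = r"
    using U unfolding uniform_hypergraph_def by auto
  obtain x :: "nat \<Rightarrow> complex" where xnz: "\<exists>v\<in>V. x v \<noteq> 0" and
    xeq: "\<And>i. i \<in> V \<Longrightarrow> (\<Sum>ys\<in>{ys. set ys \<subseteq> V \<and> length ys = r - 1}.
                   complex_of_real (adj_entry r E i ys) * prod_list (map x ys)) = lam * x i ^ (r - 1)"
    using ev unfolding tensor_eigenvalue_def by blast
  define y where "y = (\<lambda>i. cmod (x i))"
  define w where "w i = y i ^ m" for i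
  have ynn: "\<And>i. 0 \<le> y i" unfolding y_def by simp
  have wnn: "\<And>i. 0 \<le> w i" unfolding w_def using ynn by simp
  have shV: "shnb E i \<subseteq> V" for i unfolding shnb_def using Esub by blast
  define Y where "Y = {ys. set ys \<subseteq> V \<and> length ys = m}"
  have finY: "finite Y" unfolding Y_def using finite_lists_length_eq[OF finV] by simp
  have key: "real m * cmod lam * w i \<le> sum w (shnb E i)" if iV: "i \<in> V" for i
  proof -
    define Y' where "Y' = {ys \<in> Y. set (i # ys) \<in> E}"
    have finY': "finite Y'" unfolding Y'_def using finY by simp
    have Y'prop: "distinct ys \<and> i \<notin> set ys \<and> card (set ys) = m \<and> length ys = m \<and> set ys \<subseteq> V"
      if "ys \<in> Y'" for ys
    proof -
      have e: "set (i # ys) \<in> E" and l: "length ys = m" and sV: "set ys \<subseteq> V"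
        using that unfolding Y'_def Y_def by auto
      have "card (set (i # ys)) = length (i # ys)" using Ecard[OF e] l rm by simp
      hence d: "distinct (i # ys)" by (rule card_distinct)
      thus ?thesis using l sV by (simp add: distinct_card)
    qed
    have step1: "cmod lam * w i \<le> (\<Sum>ys\<in>Y'. (1 / fact m) * prod_list (map y ys))"
    proof -
      have "cmod lam * w i = cmod (lam * x i ^ (r - 1))"
        unfolding w_def y_def m_def by (simp add: norm_mult norm_power)
      also have "\<dots> = cmod (\<Sum>ys\<in>Y. complex_of_real (adj_entry r E i ys) * prod_list (map x ys))"
        using xeq[OF iV] unfolding Y_def m_def by simp
      also have "\<dots> \<le> (\<Sum>ys\<in>Y. cmod (complex_of_real (adj_entry r E i ys) * prod_list (map x ys)))"
        by (rule norm_sum)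
      also have "\<dots> = (\<Sum>ys\<in>Y. if set (i # ys) \<in> E then (1 / fact m) * prod_list (map y ys) else 0)"
        by (rule sum.cong[OF refl]) (simp add: adj_entry_def norm_mult cmod_prod_list y_def m_def)
      also have "\<dots> = (\<Sum>ys\<in>Y'. (1 / fact m) * prod_list (map y ys))"
        unfolding Y'_def by (rule sum.inter_filter[OF finY, symmetric])
      finally show ?thesis .
    qed
    have step2: "(\<Sum>ys\<in>Y'. (1 / fact m) * prod_list (map y ys)) \<le> (\<Sum>ys\<in>Y'. (1 / fact m) * (sum w (set ys) / real m))"
    proof (rule sum_mono)
      fix ys assume ys: "ys \<in> Y'"
      note P = Y'prop[OF ys]
      have "prod_list (map y ys) = prod y (set ys)" using P by (simp add: prod.distinct_set_conv_list)
      also have "\<dots> \<le> (\<Sum>j\<in>set ys. y j ^ m) / real m"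
        by (rule amgm_set) (use P mpos ynn in auto)
      finally have "prod_list (map y ys) \<le> sum w (set ys) / real m" unfolding w_def .
      thus "(1 / fact m) * prod_list (map y ys) \<le> (1 / fact m) * (sum w (set ys) / real m)"
        by (rule mult_left_mono) simp
    qed
    have swap: "(\<Sum>ys\<in>Y'. sum w (set ys)) = (\<Sum>j\<in>V. w j * real (card {ys\<in>Y'. j \<in> set ys}))"
    proof -
      have "(\<Sum>ys\<in>Y'. sum w (set ys)) = (\<Sum>ys\<in>Y'. \<Sum>j\<in>V. if j \<in> set ys then w j else 0)"
      proof (rule sum.cong[OF refl])
        fix ys assume "ys \<in> Y'"
        hence "set ys \<subseteq> V" using Y'prop by blast
        hence "V \<inter> {j. j \<in> set ys} = set ys" by blast
        thus "sum w (set ys) = (\<Sum>j\<in>V. if j \<in> set ys then w j else 0)"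
          using finV by (simp add: sum.If_cases)
      qed
      also have "\<dots> = (\<Sum>j\<in>V. \<Sum>ys\<in>Y'. if j \<in> set ys then w j else 0)" by (rule sum.swap)
      also have "\<dots> = (\<Sum>j\<in>V. w j * real (card {ys\<in>Y'. j \<in> set ys}))"
      proof (rule sum.cong[OF refl])
        fix j
        have "(\<Sum>ys\<in>Y'. if j \<in> set ys then w j else 0) = (\<Sum>ys\<in>{ys\<in>Y'. j \<in> set ys}. w j)"
          by (rule sum.inter_filter[OF finY', symmetric])
        thus "(\<Sum>ys\<in>Y'. if j \<in> set ys then w j else 0) = w j * real (card {ys\<in>Y'. j \<in> set ys})"
          by simp
      qed
      finally show ?thesis .
    qed
    have cardb: "real (card {ys\<in>Y'. j \<in> set ys}) \<le> (if j \<in> shnb E i then fact m else 0)" for j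
    proof (cases "{ys\<in>Y'. j \<in> set ys} = {}")
      case True show ?thesis unfolding True by simp
    next
      case False
      then obtain ys0 where ys0: "ys0 \<in> Y'" "j \<in> set ys0" by blast
      define e0 where "e0 = set (i # ys0)"
      have e0E: "e0 \<in> E" using ys0 unfolding Y'_def e0_def by simp
      have ji: "j \<noteq> i" using Y'prop[OF ys0(1)] ys0(2) by blast
      have jsh: "j \<in> shnb E i" unfolding shnb_def using ji e0E ys0 e0_def by auto
      have sub: "{ys\<in>Y'. j \<in> set ys} \<subseteq> {xs. length xs = m \<and> distinct xs \<and> set xs \<subseteq> e0 - {i}}"
      proof
        fix ys assume ys: "ys \<in> {ys\<in>Y'. j \<in> set ys}"
        hence ysY: "ys \<in> Y'" and jy: "j \<in> set ys" by auto
        have eE: "set (i # ys) \<in> E" using ysY unfolding Y'_def by simp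
        have "{i, j} \<subseteq> set (i # ys) \<inter> e0" using jy ys0 e0_def by auto
        hence "card {i, j} \<le> card (set (i # ys) \<inter> e0)" by (intro card_mono) auto
        hence "card (set (i # ys) \<inter> e0) \<ge> 2" using ji by simp
        hence "set (i # ys) = e0" using Lin eE e0E unfolding linear_hypergraph_def by force
        thus "ys \<in> {xs. length xs = m \<and> distinct xs \<and> set xs \<subseteq> e0 - {i}}"
          using Y'prop[OF ysY] by auto
      qed
      have ce: "card (e0 - {i}) = m"
      proof -
        have "i \<notin> set ys0" using Y'prop[OF ys0(1)] by blast
        hence "e0 - {i} = set ys0" unfolding e0_def by auto
        thus ?thesis using Y'prop[OF ys0(1)] by simp
      qed
      have fin0: "finite (e0 - {i})" unfolding e0_def by simp
      have "card {xs. length xs = m \<and> distinct xs \<and> set xs \<subseteq> e0 - {i}} = \<Prod>{card (e0 - {i}) - m + 1 .. card (e0 - {i})}"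
        by (rule card_lists_distinct_length_eq[OF fin0]) (simp add: ce)
      also have "\<dots> = fact m" using ce by (simp add: fact_prod)
      finally have cB: "card {xs. length xs = m \<and> distinct xs \<and> set xs \<subseteq> e0 - {i}} = fact m" .
      have finB: "finite {xs. length xs = m \<and> distinct xs \<and> set xs \<subseteq> e0 - {i}}"
        by (rule finite_subset[OF _ finite_lists_length_eq[OF fin0, of m]]) auto
      have "card {ys\<in>Y'. j \<in> set ys} \<le> fact m"
        using card_mono[OF finB sub] cB by simp
      hence "real (card {ys\<in>Y'. j \<in> set ys}) \<le> fact m"
        by (metis of_nat_fact of_nat_le_iff)
      thus ?thesis using jsh by simp
    qed
    have step3: "(\<Sum>j\<in>V. w j * real (card {ys\<in>Y'. j \<in> set ys})) \<le> fact m * sum w (shnb E i)"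
    proof -
      have "(\<Sum>j\<in>V. w j * real (card {ys\<in>Y'. j \<in> set ys})) \<le> (\<Sum>j\<in>V. w j * (if j \<in> shnb E i then fact m else 0))"
        by (rule sum_mono, rule mult_left_mono) (use cardb wnn in auto)
      also have "\<dots> = (\<Sum>j\<in>shnb E i. w j * fact m)"
        using finV shV[of i] by (simp add: if_distrib sum.If_cases Int_absorb1 cong: if_cong)
      also have "\<dots> = fact m * sum w (shnb E i)" by (simp add: sum_distrib_left mult.commute)
      finally show ?thesis .
    qed
    have "cmod lam * w i \<le> (1 / fact m) * (1 / real m) * (\<Sum>ys\<in>Y'. sum w (set ys))"
      using step1 step2 by (simp add: sum_distrib_left sum_divide_distrib)
    also have "\<dots> \<le> (1 / fact m) * (1 / real m) * (fact m * sum w (shnb E i))"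
    proof (rule mult_left_mono)
      show "(\<Sum>ys\<in>Y'. sum w (set ys)) \<le> fact m * sum w (shnb E i)" using swap step3 by simp
    qed simp
    also have "\<dots> = sum w (shnb E i) / real m" by simp
    finally show ?thesis using mpos by (simp add: field_simps)
  qed
  obtain v where v: "v \<in> V" "x v \<noteq> 0" using xnz by blast
  have "w v > 0" unfolding w_def y_def using v by simp
  thus ?thesis using wnn key v unfolding m_def by blast
qed

definition Qf :: "(nat \<Rightarrow> nat set) \<Rightarrow> (nat \<Rightarrow> real) \<Rightarrow> nat set \<Rightarrow> real" where
  "Qf N p S = (\<Sum>a\<in>S. p a * sum p (N a \<inter> S))"

lemma Qf_remove:
  assumes fin: "finite S" and v: "v \<in> S" and sym: "\<And>a b. a \<in> N b \<longleftrightarrow> b \<in> N a" and irr: "\<And>a. a \<notin> N a"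
  shows "Qf N p S = Qf N p (S - {v}) + 2 * p v * sum p (N v \<inter> S)"
proof -
  have "Qf N p S = p v * sum p (N v \<inter> S) + (\<Sum>a\<in>S - {v}. p a * sum p (N a \<inter> S))"
    unfolding Qf_def using fin v by (simp add: sum.remove)
  also have "(\<Sum>a\<in>S - {v}. p a * sum p (N a \<inter> S)) =
      (\<Sum>a\<in>S - {v}. p a * sum p (N a \<inter> (S - {v})) + (if v \<in> N a then p a * p v else 0))"
  proof (rule sum.cong[OF refl])
    fix a assume a: "a \<in> S - {v}"
    show "p a * sum p (N a \<inter> S) = p a * sum p (N a \<inter> (S - {v})) + (if v \<in> N a then p a * p v else 0)"
    proof (cases "v \<in> N a")
      case True
      hence "N a \<inter> S = insert v (N a \<inter> (S - {v}))" using v by blast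
      hence "sum p (N a \<inter> S) = p v + sum p (N a \<inter> (S - {v}))" using fin by simp
      thus ?thesis using True by (simp add: algebra_simps)
    next
      case False
      hence "N a \<inter> S = N a \<inter> (S - {v})" by blast
      thus ?thesis using False by simp
    qed
  qed
  also have "\<dots> = Qf N p (S - {v}) + (\<Sum>a\<in>S - {v}. if v \<in> N a then p a * p v else 0)"
    unfolding Qf_def by (simp add: sum.distrib)
  also have "(\<Sum>a\<in>S - {v}. if v \<in> N a then p a * p v else 0) = (\<Sum>a\<in>{a\<in>S - {v}. v \<in> N a}. p a * p v)"
    using fin by (intro sum.inter_filter[symmetric]) simp
  also have "{a\<in>S - {v}. v \<in> N a} = N v \<inter> S" using sym irr by blast
  also have "(\<Sum>a\<in>N v \<inter> S. p a * p v) = p v * sum p (N v \<inter> S)"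
    by (simp add: sum_distrib_left mult.commute)
  finally show ?thesis by simp
qed

lemma dense_sub:
  fixes V :: "nat set" and N :: "nat \<Rightarrow> nat set" and w :: "nat \<Rightarrow> real"
  assumes finV: "finite V" and NV: "\<And>v. N v \<subseteq> V" and sym: "\<And>a b. a \<in> N b \<longleftrightarrow> b \<in> N a"
    and irr: "\<And>a. a \<notin> N a"
    and wnn: "\<And>i. 0 \<le> w i" and wpos: "\<exists>i\<in>V. w i > 0" and mu: "\<mu> > 0"
    and ineq: "\<And>i. i \<in> V \<Longrightarrow> \<mu> * w i \<le> sum w (N i)"
    and gam: "\<gamma> \<ge> 0" and del: "\<delta> > 0" and gd: "\<mu> / real (card V) - \<gamma> \<ge> \<delta>"
  shows "\<exists>S q. S \<subseteq> V \<and> sum q S = 1 \<and> (\<forall>v\<in>S. 0 \<le> q v \<and> q v \<le> 1 / (\<mu> * sqrt \<delta>)) \<and>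
           (\<forall>v\<in>S. \<gamma> - \<gamma> * q v \<le> sum q (N v \<inter> S))"
proof -
  define W where "W = sum w V"
  have Wpos: "W > 0" unfolding W_def using wpos wnn finV
    by (metis sum_pos2)
  define p where "p v = w v / W" for v
  have pnn: "\<And>v. 0 \<le> p v" unfolding p_def using wnn Wpos by simp
  have sp: "sum p V = 1" unfolding p_def W_def using Wpos W_def by (simp add: sum_divide_distrib[symmetric])
  have pmu: "p v \<le> 1 / \<mu>" if "v \<in> V" for v
  proof -
    have "\<mu> * w v \<le> sum w (N v)" using ineq that by blast
    also have "\<dots> \<le> W" unfolding W_def using NV wnn finV by (intro sum_mono2) auto
    finally have "\<mu> * w v \<le> W" .
    thus ?thesis unfolding p_def using mu Wpos by (simp add: field_simps)
  qed
  have pN: "\<mu> * p i \<le> sum p (N i)" if "i \<in> V" for i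
    using ineq[OF that] Wpos unfolding p_def by (simp add: sum_divide_distrib[symmetric] field_simps)
  define \<Phi> where "\<Phi> S = Qf N p S - \<gamma> * (sum p S)^2" for S
  define U where "U = {v\<in>V. p v > 0}"
  have finU: "finite U" unfolding U_def using finV by simp
  have UV: "U \<subseteq> V" unfolding U_def by blast
  have zero: "p v = 0" if "v \<in> V - U" for v
  proof -
    have "\<not> p v > 0" using that unfolding U_def by blast
    thus ?thesis using pnn[of v] by linarith
  qed
  have nV: "card V > 0" using wpos finV card_gt_0_iff by blast
  have QV: "Qf N p V \<ge> \<mu> / real (card V)"
  proof -
    have "Qf N p V = (\<Sum>a\<in>V. p a * sum p (N a))" unfolding Qf_def using NV by (simp add: Int_absorb2)
    also have "\<dots> \<ge> (\<Sum>a\<in>V. p a * (\<mu> * p a))"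
      by (rule sum_mono, rule mult_left_mono) (use pN pnn in auto)
    finally have "Qf N p V \<ge> \<mu> * (\<Sum>a\<in>V. (p a)^2)" by (simp add: sum_distrib_left power2_eq_square algebra_simps)
    moreover have "(\<Sum>a\<in>V. p a)^2 \<le> (\<Sum>a\<in>V. (p a)^2) * real (card V)" by (rule sum_squared_le_sum_of_squares)
    hence "1 / real (card V) \<le> (\<Sum>a\<in>V. (p a)^2)" using sp nV by (simp add: field_simps)
    ultimately have "Qf N p V \<ge> \<mu> * (1 / real (card V))"
      using mu by (meson mult_left_mono less_imp_le order_trans)
    thus ?thesis by simp
  qed
  have QU: "Qf N p U = Qf N p V"
  proof -
    have "Qf N p U = (\<Sum>a\<in>U. p a * sum p (N a \<inter> V))"
    proof (unfold Qf_def, rule sum.cong[OF refl])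
      fix a
      have "sum p (N a \<inter> U) = sum p (N a \<inter> V)"
        by (rule sum.mono_neutral_left) (use finV UV zero in auto)
      thus "p a * sum p (N a \<inter> U) = p a * sum p (N a \<inter> V)" by simp
    qed
    also have "\<dots> = (\<Sum>a\<in>V. p a * sum p (N a \<inter> V))"
      by (rule sum.mono_neutral_left) (use finV UV zero in auto)
    finally show ?thesis unfolding Qf_def .
  qed
  have sU: "sum p U = 1"
  proof -
    have "sum p U = sum p V" by (rule sum.mono_neutral_left) (use finV UV zero in auto)
    thus ?thesis using sp by simp
  qed
  have PhiU: "\<Phi> U \<ge> \<delta>" unfolding \<Phi>_def using QU QV sU gd by simp
  define Mx where "Mx = Max (\<Phi> ` Pow U)"
  have "Mx \<in> \<Phi> ` Pow U" unfolding Mx_def using finU by (intro Max_in) auto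
  then obtain S where SU: "S \<subseteq> U" and SM: "\<Phi> S = Mx" by blast
  have Smax: "\<Phi> T \<le> \<Phi> S" if "T \<subseteq> U" for T
    unfolding SM Mx_def using finU that by (intro Max_ge) auto
  have finS: "finite S" using SU finU finite_subset by blast
  define P where "P = sum p S"
  have PhiS: "\<Phi> S \<ge> \<delta>" using Smax[of U] PhiU by simp
  have QS: "Qf N p S \<le> P^2"
  proof -
    have "Qf N p S \<le> (\<Sum>a\<in>S. p a * P)" unfolding Qf_def P_def
      by (rule sum_mono, rule mult_left_mono) (use pnn finS in \<open>auto intro: sum_mono2\<close>)
    thus ?thesis by (simp add: P_def sum_distrib_right power2_eq_square)
  qed
  have P2: "P^2 \<ge> \<delta>"
  proof -
    have "\<delta> \<le> Qf N p S - \<gamma> * P^2" using PhiS unfolding \<Phi>_def P_def by simp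
    moreover have "\<gamma> * P^2 \<ge> 0" using gam by simp
    ultimately show ?thesis using QS by linarith
  qed
  have Pnn: "P \<ge> 0" unfolding P_def using pnn by (simp add: sum_nonneg)
  have Psq: "P \<ge> sqrt \<delta>" using P2 Pnn by (metis real_sqrt_le_mono real_sqrt_abs abs_of_nonneg power2_eq_square)
  have Ppos: "P > 0" using Psq del by (meson less_le_trans real_sqrt_gt_zero)
  define q where "q v = p v / P" for v
  show ?thesis
  proof (intro exI[of _ S] exI[of _ q] conjI ballI)
    show "S \<subseteq> V" using SU UV by blast
    show "sum q S = 1" unfolding q_def using Ppos by (simp add: P_def sum_divide_distrib[symmetric])
    fix v assume vS: "v \<in> S"
    show "0 \<le> q v" unfolding q_def using pnn Ppos by simp
    have "p v \<le> 1 / \<mu>" using pmu vS SU UV by blast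
    hence "p v / P \<le> (1 / \<mu>) / P" using Ppos less_imp_le divide_right_mono by blast
    also have "\<dots> \<le> (1 / \<mu>) / sqrt \<delta>" using Psq del mu Ppos by (intro divide_left_mono) auto
    finally show "q v \<le> 1 / (\<mu> * sqrt \<delta>)" unfolding q_def by simp
  next
    fix v assume vS: "v \<in> S"
    have pv: "p v > 0" using vS SU unfolding U_def by blast
    have "\<Phi> (S - {v}) \<le> \<Phi> S" using Smax SU by blast
    moreover have "Qf N p S = Qf N p (S - {v}) + 2 * p v * sum p (N v \<inter> S)"
      by (rule Qf_remove[OF finS vS sym irr])
    moreover have "sum p S = sum p (S - {v}) + p v" using finS vS by (simp add: sum.remove)
    ultimately have "Qf N p (S - {v}) + 2 * p v * sum p (N v \<inter> S) - \<gamma> * (sum p (S - {v}) + p v)^2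
        \<ge> Qf N p (S - {v}) - \<gamma> * (sum p (S - {v}))^2"
      unfolding \<Phi>_def by simp
    hence "2 * p v * sum p (N v \<inter> S) \<ge> \<gamma> * (2 * sum p (S - {v}) * p v + (p v)^2)"
      by (simp add: power2_eq_square algebra_simps)
    moreover have "sum p (S - {v}) = P - p v" unfolding P_def using finS vS by (simp add: sum_diff1)
    ultimately have "2 * p v * sum p (N v \<inter> S) \<ge> p v * (\<gamma> * (2 * P - p v))"
      by (simp add: power2_eq_square algebra_simps)
    hence "2 * sum p (N v \<inter> S) \<ge> \<gamma> * (2 * P - p v)" using pv by simp
    moreover have "\<gamma> * (2 * P - p v) = 2 * (\<gamma> * P) - \<gamma> * p v" by (simp add: algebra_simps)
    moreover have "\<gamma> * p v \<ge> 0" using gam pnn[of v] by simp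
    ultimately have "sum p (N v \<inter> S) \<ge> \<gamma> * P - \<gamma> * p v" by linarith
    hence "sum p (N v \<inter> S) / P \<ge> (\<gamma> * P - \<gamma> * p v) / P" using divide_right_mono[OF _ less_imp_le[OF Ppos]] by blast
    thus "\<gamma> - \<gamma> * q v \<le> sum q (N v \<inter> S)" unfolding q_def using Ppos
      by (simp add: sum_divide_distrib[symmetric] diff_divide_distrib)
  qed
qed

definition multip :: "nat set \<Rightarrow> (nat \<Rightarrow> nat set) \<Rightarrow> nat \<Rightarrow> nat \<Rightarrow> (nat \<Rightarrow> nat set) \<Rightarrow> bool" where
  "multip S N m L P \<longleftrightarrow> (\<forall>i<m. P i \<subseteq> S \<and> L \<le> card (P i)) \<and>
     (\<forall>i<m. \<forall>j<m. i \<noteq> j \<longrightarrow> P i \<inter> P j = {} \<and> (\<forall>u\<in>P i. \<forall>v\<in>P j. v \<in> N u))"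

definition wes_prop :: "nat \<Rightarrow> bool" where
  "wes_prop m \<longleftrightarrow> (\<forall>\<epsilon>>0. \<forall>L. \<exists>\<eta>>0. \<forall>S N (q::nat\<Rightarrow>real). finite S \<longrightarrow>
      (\<forall>v\<in>S. N v \<subseteq> S \<and> v \<notin> N v) \<longrightarrow> (\<forall>u\<in>S. \<forall>v\<in>S. v \<in> N u \<longrightarrow> u \<in> N v) \<longrightarrow>
      (\<forall>v\<in>S. 0 \<le> q v \<and> q v \<le> \<eta>) \<longrightarrow> sum q S = 1 \<longrightarrow>
      (m = 0 \<or> (\<forall>v\<in>S. 1 - 1 / real m + \<epsilon> \<le> sum q (N v))) \<longrightarrow>
      (\<exists>P. multip S N (Suc m) L P))"

lemma pigeon:
  assumes "finite A" "finite B" "\<phi> ` A \<subseteq> B" "card A > L * card B"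
  shows "\<exists>b\<in>B. card {a\<in>A. \<phi> a = b} > L"
proof (rule ccontr)
  assume "\<not> ?thesis"
  hence le: "\<forall>b\<in>B. card {a\<in>A. \<phi> a = b} \<le> L" by auto
  have "A = (\<Union>b\<in>B. {a\<in>A. \<phi> a = b})" using assms(3) by auto
  hence "card A \<le> (\<Sum>b\<in>B. card {a\<in>A. \<phi> a = b})" by (metis card_UN_le assms(2))
  also have "\<dots> \<le> (\<Sum>b\<in>B. L)" by (rule sum_mono) (use le in auto)
  also have "\<dots> = L * card B" by simp
  finally show False using assms(4) by simp
qed

lemma wes_base: "wes_prop 0"
  unfolding wes_prop_def
proof (intro allI impI)
  fix \<epsilon> :: real and L :: nat assume "\<epsilon> > 0"
  show "\<exists>\<eta>>0. \<forall>S N (q::nat\<Rightarrow>real). finite S \<longrightarrow>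
      (\<forall>v\<in>S. N v \<subseteq> S \<and> v \<notin> N v) \<longrightarrow> (\<forall>u\<in>S. \<forall>v\<in>S. v \<in> N u \<longrightarrow> u \<in> N v) \<longrightarrow>
      (\<forall>v\<in>S. 0 \<le> q v \<and> q v \<le> \<eta>) \<longrightarrow> sum q S = 1 \<longrightarrow>
      (0 = (0::nat) \<or> (\<forall>v\<in>S. 1 - 1 / real 0 + \<epsilon> \<le> sum q (N v))) \<longrightarrow>
      (\<exists>P. multip S N (Suc 0) L P)"
  proof (intro exI[of _ "1 / (real L + 1)"] conjI allI impI)
    show "0 < 1 / (real L + 1)" by simp
    fix S N and q :: "nat \<Rightarrow> real"
    assume fin: "finite S" and q: "\<forall>v\<in>S. 0 \<le> q v \<and> q v \<le> 1 / (real L + 1)" and s1: "sum q S = 1"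
    have "1 \<le> (\<Sum>v\<in>S. 1 / (real L + 1))" using s1 q by (metis sum_mono)
    hence "1 \<le> real (card S) / (real L + 1)" by simp
    hence "real L + 1 \<le> real (card S)" by (simp add: field_simps)
    hence "L \<le> card S" by linarith
    thus "\<exists>P. multip S N (Suc 0) L P"
      by (intro exI[of _ "\<lambda>_. S"]) (simp add: multip_def)
  qed
qed

lemma wes_step:
  assumes IH: "wes_prop m"
  shows "wes_prop (Suc m)"
  unfolding wes_prop_def
proof (intro allI impI)
  fix \<epsilon> :: real and L :: nat assume ep: "\<epsilon> > 0"
  define M where "M = Suc m"
  define T where "T = nat \<lceil>4 * real L / \<epsilon>\<rceil> + L + 1"
  have TL: "L \<le> T" and Tpos: "T > 0" unfolding T_def by auto
  have T4: "4 * real L / \<epsilon> \<le> real T" unfolding T_def by linarith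
  have LT: "real L / real T \<le> \<epsilon> / 4"
    using T4 ep Tpos by (simp add: field_simps)
  obtain \<eta>0 where eta0: "\<eta>0 > 0" and H0: "\<forall>S N (q::nat\<Rightarrow>real). finite S \<longrightarrow>
      (\<forall>v\<in>S. N v \<subseteq> S \<and> v \<notin> N v) \<longrightarrow> (\<forall>u\<in>S. \<forall>v\<in>S. v \<in> N u \<longrightarrow> u \<in> N v) \<longrightarrow>
      (\<forall>v\<in>S. 0 \<le> q v \<and> q v \<le> \<eta>0) \<longrightarrow> sum q S = 1 \<longrightarrow>
      (m = 0 \<or> (\<forall>v\<in>S. 1 - 1 / real m + \<epsilon> \<le> sum q (N v))) \<longrightarrow>
      (\<exists>P. multip S N (Suc m) T P)"
    using IH ep unfolding wes_prop_def by blast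
  define \<eta> where "\<eta> = min \<eta>0 (min (\<epsilon> / (4 * real M * real T)) (\<epsilon> / (2 * (real L + 1) * 2 ^ (M * T))))"
  have etapos: "\<eta> > 0" unfolding \<eta>_def M_def using eta0 ep Tpos by auto
  have eta1: "\<eta> \<le> \<eta>0" unfolding \<eta>_def by auto
  have eta2: "real M * real T * \<eta> \<le> \<epsilon> / 4"
  proof -
    have "\<eta> \<le> \<epsilon> / (4 * real M * real T)" unfolding \<eta>_def by auto
    moreover have "4 * real M * real T > 0" using Tpos M_def by simp
    ultimately have "\<eta> * (4 * real M * real T) \<le> \<epsilon>" by (simp add: pos_le_divide_eq)
    thus ?thesis by (simp add: field_simps)
  qed
  have eta3: "\<eta> * (2 * (real L + 1) * 2 ^ (M * T)) \<le> \<epsilon>"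
  proof -
    have "\<eta> \<le> \<epsilon> / (2 * (real L + 1) * 2 ^ (M * T))" unfolding \<eta>_def by auto
    moreover have "(2::real) * (real L + 1) * 2 ^ (M * T) > 0" by simp
    ultimately show ?thesis using pos_le_divide_eq by blast
  qed
  show "\<exists>\<eta>>0. \<forall>S N (q::nat\<Rightarrow>real). finite S \<longrightarrow>
      (\<forall>v\<in>S. N v \<subseteq> S \<and> v \<notin> N v) \<longrightarrow> (\<forall>u\<in>S. \<forall>v\<in>S. v \<in> N u \<longrightarrow> u \<in> N v) \<longrightarrow>
      (\<forall>v\<in>S. 0 \<le> q v \<and> q v \<le> \<eta>) \<longrightarrow> sum q S = 1 \<longrightarrow>
      (Suc m = 0 \<or> (\<forall>v\<in>S. 1 - 1 / real (Suc m) + \<epsilon> \<le> sum q (N v))) \<longrightarrow>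
      (\<exists>P. multip S N (Suc (Suc m)) L P)"
  proof (intro exI[of _ \<eta>] conjI allI impI)
    show "\<eta> > 0" by (rule etapos)
    fix S N and q :: "nat \<Rightarrow> real"
    assume fin: "finite S" and Nok: "\<forall>v\<in>S. N v \<subseteq> S \<and> v \<notin> N v"
      and sym: "\<forall>u\<in>S. \<forall>v\<in>S. v \<in> N u \<longrightarrow> u \<in> N v"
      and q: "\<forall>v\<in>S. 0 \<le> q v \<and> q v \<le> \<eta>" and s1: "sum q S = 1"
      and degd: "Suc m = 0 \<or> (\<forall>v\<in>S. 1 - 1 / real (Suc m) + \<epsilon> \<le> sum q (N v))"
    have deg: "\<forall>v\<in>S. 1 - 1 / real M + \<epsilon> \<le> sum q (N v)" using degd M_def by simp
    have degIH: "m = 0 \<or> (\<forall>v\<in>S. 1 - 1 / real m + \<epsilon> \<le> sum q (N v))"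
    proof (cases "m = 0")
      case False
      hence "1 / real (Suc m) \<le> 1 / real m" by (simp add: frac_le)
      thus ?thesis using deg M_def by force
    qed simp
    have "\<forall>v\<in>S. 0 \<le> q v \<and> q v \<le> \<eta>0" using q eta1 by force
    hence "\<exists>P. multip S N (Suc m) T P"
      using H0[THEN spec[of _ S], THEN spec[of _ N], THEN spec[of _ q]] fin Nok sym s1 degIH by blast
    then obtain P where P: "multip S N M T P" unfolding M_def by blast
    define Q where "Q i = (SOME X. X \<subseteq> P i \<and> card X = T)" for i
    have Q: "Q i \<subseteq> P i \<and> card (Q i) = T" if "i < M" for i
    proof -
      have "T \<le> card (P i)" using P that unfolding multip_def by blast
      then obtain X where "X \<subseteq> P i \<and> card X = T"
        using obtain_subset_with_card_n by metis
      thus ?thesis unfolding Q_def by (metis (mono_tags, lifting) someI_ex)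
    qed
    have PS: "P i \<subseteq> S" if "i < M" for i using P that unfolding multip_def by blast
    have Pdisj: "P i \<inter> P j = {}" if "i < M" "j < M" "i \<noteq> j" for i j
      using P that unfolding multip_def by blast
    have Padj: "v \<in> N u" if "i < M" "j < M" "i \<noteq> j" "u \<in> P i" "v \<in> P j" for i j u v
      using P that unfolding multip_def by blast
    have QS: "Q i \<subseteq> S" if "i < M" for i using Q PS that by blast
    have finQ: "finite (Q i)" if "i < M" for i using QS fin that finite_subset by blast
    have Qdisj: "Q i \<inter> Q j = {}" if "i < M" "j < M" "i \<noteq> j" for i j
    proof -
      have "Q i \<inter> Q j \<subseteq> P i \<inter> P j" using Q that by auto
      thus ?thesis using Pdisj[OF that] by auto
    qed
    define W where "W = (\<Union>i<M. Q i)"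
    have WS: "W \<subseteq> S" unfolding W_def using QS by blast
    have finW: "finite W" using WS fin finite_subset by blast
    have cardUN: "card (A \<inter> W) = (\<Sum>i<M. card (A \<inter> Q i))" for A
    proof -
      have "A \<inter> W = (\<Union>i<M. A \<inter> Q i)" unfolding W_def by blast
      moreover have "card (\<Union>i<M. A \<inter> Q i) = (\<Sum>i<M. card (A \<inter> Q i))"
        apply (rule card_UN_disjoint)
        subgoal by simp
        subgoal using finQ by (auto intro: finite_Int)
        subgoal using Qdisj by (simp add: disjoint_iff)
        done
      ultimately show ?thesis by simp
    qed
    have cardW: "card W = M * T"
    proof -
      have "card W = card (W \<inter> W)" by simp
      also have "\<dots> = (\<Sum>i<M. card (W \<inter> Q i))" by (rule cardUN)
      also have "\<dots> = (\<Sum>i<M. T)"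
      proof (rule sum.cong[OF refl])
        fix i assume "i \<in> {..<M}"
        hence "W \<inter> Q i = Q i" unfolding W_def by blast
        thus "card (W \<inter> Q i) = T" using Q \<open>i \<in> {..<M}\<close> by simp
      qed
      finally show ?thesis by simp
    qed
    define c where "c u = card (N u \<inter> W)" for u
    have cle: "c u \<le> M * T" for u unfolding c_def using cardW finW
      by (metis card_mono inf_le2)
    have cleR: "real (c u) \<le> real M * real T" for u using cle[of u]
      by (metis of_nat_le_iff of_nat_mult)
    have dc: "(\<Sum>u\<in>S. q u * real (c u)) = (\<Sum>w\<in>W. sum q (N w))"
    proof -
      have "(\<Sum>u\<in>S. q u * real (c u)) = (\<Sum>u\<in>S. \<Sum>w\<in>W. if w \<in> N u then q u else 0)"
      proof (rule sum.cong[OF refl])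
        fix u assume "u \<in> S"
        have "real (c u) = (\<Sum>w\<in>W. if w \<in> N u then 1 else 0)"
          unfolding c_def using finW
          by (simp add: sum.If_cases Int_commute)
        thus "q u * real (c u) = (\<Sum>w\<in>W. if w \<in> N u then q u else 0)"
          by (simp add: sum_distrib_left if_distrib cong: if_cong)
      qed
      also have "\<dots> = (\<Sum>w\<in>W. \<Sum>u\<in>S. if w \<in> N u then q u else 0)" by (rule sum.swap)
      also have "\<dots> = (\<Sum>w\<in>W. sum q (N w))"
      proof (rule sum.cong[OF refl])
        fix w assume w: "w \<in> W"
        have "S \<inter> {u. w \<in> N u} = N w" using w WS Nok sym by blast
        thus "(\<Sum>u\<in>S. if w \<in> N u then q u else 0) = sum q (N w)"
          using fin by (simp add: sum.If_cases)
      qed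
      finally show ?thesis .
    qed
    have lower: "(\<Sum>w\<in>W. sum q (N w)) \<ge> real (M * T) * (1 - 1 / real M + \<epsilon>)"
    proof -
      have "(\<Sum>w\<in>W. sum q (N w)) \<ge> (\<Sum>w\<in>W. 1 - 1 / real M + \<epsilon>)"
        by (rule sum_mono) (use deg WS in auto)
      thus ?thesis using cardW by simp
    qed
    define G where "G = {u \<in> S - W. \<forall>i<M. L \<le> card (N u \<inter> Q i)}"
    define Bd where "Bd = S - W - G"
    have finG: "finite G" and finBd: "finite Bd" unfolding G_def Bd_def using fin by auto
    have Ssplit: "S = W \<union> G \<union> Bd" unfolding G_def Bd_def using WS by blast
    have qnn: "\<And>v. v \<in> S \<Longrightarrow> 0 \<le> q v" using q by blast
    have sW: "(\<Sum>u\<in>W. q u * real (c u)) \<le> real (M * T) * \<eta> * real (M * T)"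
    proof -
      have "(\<Sum>u\<in>W. q u * real (c u)) \<le> (\<Sum>u\<in>W. \<eta> * real (M * T))"
        apply (rule sum_mono)
        apply (rule mult_mono)
        using q WS cleR by auto
      thus ?thesis using cardW by simp
    qed
    have sG: "(\<Sum>u\<in>G. q u * real (c u)) \<le> sum q G * real (M * T)"
    proof -
      have "(\<Sum>u\<in>G. q u * real (c u)) \<le> (\<Sum>u\<in>G. q u * real (M * T))"
        apply (rule sum_mono)
        apply (rule mult_left_mono)
        using qnn cleR unfolding G_def by auto
      thus ?thesis by (simp add: sum_distrib_right)
    qed
    have cBd: "real (c u) \<le> real ((M - 1) * T + L)" if "u \<in> Bd" for u
    proof -
      from that obtain i where i: "i < M" "card (N u \<inter> Q i) < L" unfolding Bd_def G_def by auto
      have "c u = (\<Sum>j<M. card (N u \<inter> Q j))" unfolding c_def by (rule cardUN)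
      also have "\<dots> = card (N u \<inter> Q i) + (\<Sum>j\<in>{..<M} - {i}. card (N u \<inter> Q j))"
        using i by (simp add: sum.remove)
      also have "\<dots> \<le> L + (\<Sum>j\<in>{..<M} - {i}. T)"
        apply (rule add_mono)
        using i apply simp
        apply (rule sum_mono)
        using Q finQ by (metis Diff_iff card_mono inf_le2 lessThan_iff)
      also have "\<dots> = L + (M - 1) * T" using i by simp
      finally have "c u \<le> (M - 1) * T + L" by simp
      thus ?thesis by (simp only: of_nat_le_iff)
    qed
    have sBd: "(\<Sum>u\<in>Bd. q u * real (c u)) \<le> real ((M - 1) * T + L)"
    proof -
      have "(\<Sum>u\<in>Bd. q u * real (c u)) \<le> (\<Sum>u\<in>Bd. q u * real ((M - 1) * T + L))"
        apply (rule sum_mono)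
        apply (rule mult_left_mono)
        using qnn cBd unfolding Bd_def by auto
      also have "\<dots> = sum q Bd * real ((M - 1) * T + L)" by (simp add: sum_distrib_right)
      also have "\<dots> \<le> 1 * real ((M - 1) * T + L)"
      proof (rule mult_right_mono)
        have "sum q Bd \<le> sum q S"
          apply (rule sum_mono2[OF fin]) unfolding Bd_def using qnn by auto
        thus "sum q Bd \<le> 1" using s1 by simp
      qed simp
      finally show ?thesis by simp
    qed
    have "(\<Sum>u\<in>S. q u * real (c u)) = (\<Sum>u\<in>W. q u * real (c u)) + (\<Sum>u\<in>G. q u * real (c u)) + (\<Sum>u\<in>Bd. q u * real (c u))"
    proof -
      have d1: "W \<inter> G = {}" "(W \<union> G) \<inter> Bd = {}" unfolding G_def Bd_def by auto
      show ?thesis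
        apply (subst Ssplit)
        apply (subst sum.union_disjoint)
        using finW finG finBd d1 apply auto[4]
        apply (subst sum.union_disjoint)
        using finW finG finBd d1 by auto
    qed
    hence main: "real (M * T) * (1 - 1 / real M + \<epsilon>) \<le> real (M * T) * \<eta> * real (M * T) + sum q G * real (M * T) + real ((M - 1) * T + L)"
      using dc lower sW sG sBd by linarith
    have Mpos: "M > 0" unfolding M_def by simp
    have "real (M * T) * (1 - 1 / real M + \<epsilon>) = real ((M - 1) * T) + real (M * T) * \<epsilon>"
      using Mpos by (simp add: field_simps of_nat_diff)
    with main have "real (M * T) * \<epsilon> \<le> real (M * T) * \<eta> * real (M * T) + sum q G * real (M * T) + real L"
      by simp
    hence "\<epsilon> \<le> \<eta> * real (M * T) + sum q G + real L / real (M * T)"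
      using Mpos Tpos by (simp add: field_simps)
    moreover have "real L / real (M * T) \<le> real L / real T"
      using Mpos Tpos by (simp add: frac_le)
    moreover have "\<eta> * real (M * T) \<le> \<epsilon> / 4" using eta2 by (simp add: algebra_simps)
    ultimately have qG: "sum q G \<ge> \<epsilon> / 2" using LT by linarith
    have "sum q G \<le> real (card G) * \<eta>"
    proof -
      have "sum q G \<le> (\<Sum>u\<in>G. \<eta>)" apply (rule sum_mono) using q unfolding G_def by auto
      thus ?thesis by simp
    qed
    hence "\<epsilon> / 2 \<le> real (card G) * \<eta>" using qG by linarith
    hence "\<epsilon> \<le> 2 * (real (card G) * \<eta>)" by linarith
    hence "\<eta> * (2 * (real L + 1) * 2 ^ (M * T)) \<le> \<eta> * (2 * real (card G))" using eta3 by (simp add: algebra_simps)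
    hence "2 * (real L + 1) * 2 ^ (M * T) \<le> 2 * real (card G)" using etapos mult_le_cancel_left_pos by blast
    hence "(real L + 1) * 2 ^ (M * T) \<le> real (card G)" by (simp only: mult.assoc)
    moreover have "real ((L + 1) * 2 ^ (M * T)) = (real L + 1) * 2 ^ (M * T)" by (simp add: algebra_simps)
    ultimately have "real ((L + 1) * 2 ^ (M * T)) \<le> real (card G)" by linarith
    hence c1: "(L + 1) * 2 ^ (M * T) \<le> card G" by (simp only: of_nat_le_iff)
    have "L * card (Pow W) < (L + 1) * 2 ^ (M * T)"
      using card_Pow[OF finW] cardW by simp
    hence cG: "card G > L * card (Pow W)" using c1 by linarith
    obtain B where B: "B \<in> Pow W" and cU: "card {u \<in> G. N u \<inter> W = B} > L"
      using pigeon[OF finG finite_Pow_iff[THEN iffD2, OF finW], of "\<lambda>u. N u \<inter> W" L] cG by auto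
    define U where "U = {u \<in> G. N u \<inter> W = B}"
    define P' where "P' i = (if i < M then B \<inter> Q i else U)" for i
    have US: "U \<subseteq> S" and UW: "U \<inter> W = {}" unfolding U_def G_def by auto
    have Une: "U \<noteq> {}" using cU U_def by fastforce
    then obtain u0 where u0: "u0 \<in> U" by blast
    show "\<exists>P. multip S N (Suc (Suc m)) L P"
    proof (intro exI[of _ P'])
      show "multip S N (Suc (Suc m)) L P'"
        unfolding multip_def
      proof (intro conjI allI impI)
        fix i assume i: "i < Suc (Suc m)"
        show "P' i \<subseteq> S" using QS US unfolding P'_def by auto
        show "L \<le> card (P' i)"
        proof (cases "i < M")
          case True
          have "B \<inter> Q i = N u0 \<inter> Q i" using u0 True unfolding U_def W_def by blast
          thus ?thesis using u0 True unfolding P'_def U_def G_def by auto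
        next
          case False thus ?thesis using cU unfolding P'_def U_def by simp
        qed
      next
        fix i j assume i: "i < Suc (Suc m)" and j: "j < Suc (Suc m)" and ij: "i \<noteq> j"
        show "P' i \<inter> P' j = {}"
        proof (cases "i < M"; cases "j < M")
          assume "i < M" "j < M"
          thus ?thesis using Qdisj[of i j] ij unfolding P'_def by auto
        next
          assume "i < M" "\<not> j < M"
          moreover have "Q i \<subseteq> W" using \<open>i < M\<close> unfolding W_def by blast
          ultimately show ?thesis using UW unfolding P'_def by auto
        next
          assume "\<not> i < M" "j < M"
          moreover have "Q j \<subseteq> W" using \<open>j < M\<close> unfolding W_def by blast
          ultimately show ?thesis using UW unfolding P'_def by auto
        next
          assume "\<not> i < M" "\<not> j < M"
          thus ?thesis using i j ij unfolding M_def by simp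
        qed
        show "\<forall>u\<in>P' i. \<forall>v\<in>P' j. v \<in> N u"
        proof (intro ballI)
          fix u v assume u: "u \<in> P' i" and v: "v \<in> P' j"
          consider "i < M" "j < M" | "i < M" "\<not> j < M" | "\<not> i < M" "j < M" | "\<not> i < M" "\<not> j < M" by blast
          thus "v \<in> N u"
          proof cases
            case 1
            hence "u \<in> P i" "v \<in> P j" using u v Q[of i] Q[of j] unfolding P'_def by auto
            thus ?thesis using Padj[OF 1 ij] by blast
          next
            case 2
            hence "u \<in> B" "v \<in> U" using u v unfolding P'_def by auto
            hence "u \<in> N v" unfolding U_def by blast
            moreover have "u \<in> S" "v \<in> S" using \<open>u \<in> B\<close> B WS \<open>v \<in> U\<close> US by auto
            ultimately show ?thesis using sym by blast
          next
            case 3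
            hence "v \<in> B" "u \<in> U" using u v unfolding P'_def by auto
            thus ?thesis unfolding U_def by blast
          next
            case 4 thus ?thesis using i j ij unfolding M_def by simp
          qed
        qed
      qed
    qed
  qed
qed

lemma wes_all: "wes_prop m"
  by (induction m) (auto intro: wes_base wes_step)

definition hgCC :: "nat set set \<Rightarrow> nat set \<Rightarrow> nat set" where
  "hgCC E X = \<Union>{e\<in>E. 2 \<le> card (e \<inter> X)}"

definition hgDD :: "nat set set \<Rightarrow> nat set \<Rightarrow> nat set" where
  "hgDD E X = \<Union>{e\<in>E. \<exists>s\<in>X. s \<in> e \<and> (\<exists>w\<in>hgCC E X - X. w \<in> e)}"

definition goodX :: "nat set set \<Rightarrow> nat set \<Rightarrow> bool" where
  "goodX E X \<longleftrightarrow> (\<forall>e\<in>E. card (e \<inter> X) \<le> 2) \<and>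
     (\<forall>e\<in>E. \<forall>e'\<in>E. e \<noteq> e' \<longrightarrow> card (e \<inter> X) = 2 \<longrightarrow> card (e' \<inter> X) = 2 \<longrightarrow> (e - X) \<inter> (e' - X) = {})"

definition pairU :: "nat set set \<Rightarrow> nat \<Rightarrow> nat \<Rightarrow> nat set" where
  "pairU E a b = (if a = b then {} else \<Union>{e\<in>E. a \<in> e \<and> b \<in> e})"

lemma lin_eq:
  assumes Lin: "linear_hypergraph E" and "e \<in> E" "e' \<in> E" "a \<in> e" "b \<in> e" "a \<in> e'" "b \<in> e'" "a \<noteq> b"
    and fe: "finite e"
  shows "e = e'"
proof (rule ccontr)
  assume ne: "e \<noteq> e'"
  have "card (e \<inter> e') \<le> 1" using Lin assms(2,3) ne unfolding linear_hypergraph_def by blast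
  moreover have "{a, b} \<subseteq> e \<inter> e'" using assms by auto
  moreover have "finite (e \<inter> e')" using fe by simp
  ultimately have "card {a, b} \<le> 1" by (meson card_mono order_trans)
  thus False using assms(8) by simp
qed

lemma pairU_card:
  assumes U: "uniform_hypergraph r V E" and Lin: "linear_hypergraph E"
  shows "card (pairU E a b) \<le> r" "pairU E a b \<subseteq> V"
proof -
  have Ec: "\<And>e. e \<in> E \<Longrightarrow> card e = r \<and> e \<subseteq> V" using U unfolding uniform_hypergraph_def by auto
  show "card (pairU E a b) \<le> r"
  proof (cases "a \<noteq> b \<and> (\<exists>e\<in>E. a \<in> e \<and> b \<in> e)")
    case True
    then obtain e0 where e0: "e0 \<in> E" "a \<in> e0" "b \<in> e0" and ab: "a \<noteq> b" by blast
    have "{e\<in>E. a \<in> e \<and> b \<in> e} = {e0}"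
    proof -
      have "e = e0" if "e \<in> E" "a \<in> e" "b \<in> e" for e
        using lin_eq[OF Lin that(1) e0(1) that(2,3) e0(2,3) ab] Ec[OF that(1)] finite_subset
          U unfolding uniform_hypergraph_def by blast
      thus ?thesis using e0 by blast
    qed
    thus ?thesis unfolding pairU_def using ab Ec[OF e0(1)] by simp
  next
    case False
    hence "pairU E a b = {}" unfolding pairU_def by auto
    thus ?thesis by simp
  qed
  show "pairU E a b \<subseteq> V" unfolding pairU_def using Ec by auto
qed

lemma CC_sub: "hgCC E X \<subseteq> (\<Union>ab\<in>X \<times> X. pairU E (fst ab) (snd ab))"
proof
  fix x assume "x \<in> hgCC E X"
  then obtain e where e: "e \<in> E" "2 \<le> card (e \<inter> X)" "x \<in> e" unfolding hgCC_def by blast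
  then obtain a b where ab: "a \<in> e \<inter> X" "b \<in> e \<inter> X" "a \<noteq> b"
  proof -
    have "\<not> card (e \<inter> X) \<le> 1" using e by simp
    then obtain a b where "a \<in> e \<inter> X" "b \<in> e \<inter> X" "a \<noteq> b"
      by (metis card_le_Suc0_iff_eq One_nat_def card.infinite zero_le)
    thus ?thesis using that by blast
  qed
  hence "x \<in> pairU E a b" unfolding pairU_def using e by auto
  thus "x \<in> (\<Union>ab\<in>X \<times> X. pairU E (fst ab) (snd ab))" using ab by force
qed

lemma DD_sub: "hgDD E X \<subseteq> (\<Union>ab\<in>X \<times> hgCC E X. pairU E (fst ab) (snd ab))"
proof
  fix x assume "x \<in> hgDD E X"
  then obtain e s w where e: "e \<in> E" "x \<in> e" "s \<in> X" "s \<in> e" "w \<in> hgCC E X - X" "w \<in> e"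
    unfolding hgDD_def by blast
  hence "s \<noteq> w" by blast
  hence "x \<in> pairU E s w" unfolding pairU_def using e by auto
  thus "x \<in> (\<Union>ab\<in>X \<times> hgCC E X. pairU E (fst ab) (snd ab))" using e by force
qed

lemma card_UN_pairU:
  assumes U: "uniform_hypergraph r V E" and Lin: "linear_hypergraph E" and fin: "finite A" "finite B"
  shows "card (\<Union>ab\<in>A \<times> B. pairU E (fst ab) (snd ab)) \<le> r * card A * card B"
proof -
  have "card (\<Union>ab\<in>A \<times> B. pairU E (fst ab) (snd ab)) \<le> (\<Sum>ab\<in>A \<times> B. card (pairU E (fst ab) (snd ab)))"
    by (rule card_UN_le) (use fin in simp)
  also have "\<dots> \<le> (\<Sum>ab\<in>A \<times> B. r)" by (rule sum_mono) (use pairU_card[OF U Lin] in blast)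
  also have "\<dots> = r * card A * card B" by (simp add: card_cartesian_product)
  finally show ?thesis .
qed

lemma CC_DD_bounds:
  assumes U: "uniform_hypergraph r V E" and Lin: "linear_hypergraph E" and fin: "finite X"
  shows "finite (hgCC E X)" "card (hgCC E X) \<le> r * card X * card X"
        "finite (hgDD E X)" "card (hgDD E X) \<le> r * card X * (r * card X * card X)"
proof -
  have finV: "finite V" using U unfolding uniform_hypergraph_def by simp
  have sub1: "(\<Union>ab\<in>X \<times> X. pairU E (fst ab) (snd ab)) \<subseteq> V" using pairU_card(2)[OF U Lin] by blast
  show f1: "finite (hgCC E X)" using CC_sub sub1 finV finite_subset by (metis subset_trans)
  show c1: "card (hgCC E X) \<le> r * card X * card X"
    using card_mono[OF finite_subset[OF sub1 finV] CC_sub] card_UN_pairU[OF U Lin fin fin] by linarith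
  have sub2: "(\<Union>ab\<in>X \<times> hgCC E X. pairU E (fst ab) (snd ab)) \<subseteq> V" using pairU_card(2)[OF U Lin] by blast
  show "finite (hgDD E X)" using DD_sub sub2 finV finite_subset by (metis subset_trans)
  have "card (hgDD E X) \<le> r * card X * card (hgCC E X)"
    using card_mono[OF finite_subset[OF sub2 finV] DD_sub] card_UN_pairU[OF U Lin fin f1] by linarith
  also have "\<dots> \<le> r * card X * (r * card X * card X)" using c1 by simp
  finally show "card (hgDD E X) \<le> r * card X * (r * card X * card X)" .
qed

lemma card_int_insert:
  assumes "finite e" "t \<notin> X"
  shows "card (e \<inter> insert t X) = card (e \<inter> X) + (if t \<in> e then 1 else 0)"
proof (cases "t \<in> e")
  case True
  hence "e \<inter> insert t X = insert t (e \<inter> X)" by blast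
  thus ?thesis using assms True by simp
next
  case False
  hence "e \<inter> insert t X = e \<inter> X" by blast
  thus ?thesis using False by simp
qed

lemma good_insert:
  assumes U: "uniform_hypergraph r V E" and Lin: "linear_hypergraph E"
    and g: "goodX E X" and tX: "t \<notin> X" and tC: "t \<notin> hgCC E X" and tD: "t \<notin> hgDD E X"
  shows "goodX E (insert t X)"
proof -
  have finE: "\<And>e. e \<in> E \<Longrightarrow> finite e" using U unfolding uniform_hypergraph_def
    by (meson finite_subset)
  have ci: "\<And>e. e \<in> E \<Longrightarrow> card (e \<inter> insert t X) = card (e \<inter> X) + (if t \<in> e then 1 else 0)"
    using card_int_insert[OF finE tX] by blast
  have le1: "card (e \<inter> X) \<le> 1" if "e \<in> E" "t \<in> e" for e
  proof (rule ccontr)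
    assume "\<not> card (e \<inter> X) \<le> 1"
    hence "e \<subseteq> hgCC E X" unfolding hgCC_def using that by auto
    thus False using tC that by blast
  qed
  have p1: "\<forall>e\<in>E. card (e \<inter> insert t X) \<le> 2"
  proof
    fix e assume e: "e \<in> E"
    show "card (e \<inter> insert t X) \<le> 2"
    proof (cases "t \<in> e")
      case True thus ?thesis using ci[OF e] le1[OF e] by simp
    next
      case False thus ?thesis using ci[OF e] g e unfolding goodX_def by simp
    qed
  qed
  have mixed: False if e: "e \<in> E" "e' \<in> E" "t \<in> e" "t \<notin> e'"
      "card (e \<inter> insert t X) = 2" "card (e' \<inter> insert t X) = 2" "w \<in> e - insert t X" "w \<in> e' - insert t X" for e e' w
  proof -
    have c': "card (e' \<inter> X) = 2" using ci[OF e(2)] e by simp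
    hence "e' \<subseteq> hgCC E X" unfolding hgCC_def using e by auto
    hence wC: "w \<in> hgCC E X - X" using e by blast
    have "card (e \<inter> X) = 1" using ci[OF e(1)] e by simp
    then obtain s where s: "s \<in> e \<inter> X" by (metis card_1_singletonE insertI1)
    have "e \<subseteq> hgDD E X" unfolding hgDD_def using e s wC by blast
    thus False using tD e by blast
  qed
  have p2: "\<forall>e\<in>E. \<forall>e'\<in>E. e \<noteq> e' \<longrightarrow> card (e \<inter> insert t X) = 2 \<longrightarrow> card (e' \<inter> insert t X) = 2 \<longrightarrow>
      (e - insert t X) \<inter> (e' - insert t X) = {}"
  proof (intro ballI impI)
    fix e e' assume e: "e \<in> E" and e': "e' \<in> E" and ne: "e \<noteq> e'"
      and c: "card (e \<inter> insert t X) = 2" and c': "card (e' \<inter> insert t X) = 2"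
    show "(e - insert t X) \<inter> (e' - insert t X) = {}"
    proof (rule ccontr)
      assume "(e - insert t X) \<inter> (e' - insert t X) \<noteq> {}"
      then obtain w where w: "w \<in> e - insert t X" "w \<in> e' - insert t X" by blast
      consider "t \<in> e" "t \<in> e'" | "t \<in> e" "t \<notin> e'" | "t \<notin> e" "t \<in> e'" | "t \<notin> e" "t \<notin> e'" by blast
      thus False
      proof cases
        case 1
        have "t \<noteq> w" using w by blast
        thus False using lin_eq[OF Lin e e' _ _ _ _ \<open>t \<noteq> w\<close> finE[OF e]] 1 w ne by blast
      next
        case 2 thus False using mixed[OF e e' _ _ c c' w] by blast
      next
        case 3 thus False using mixed[OF e' e _ _ c' c w(2) w(1)] by blast
      next
        case 4
        hence "card (e \<inter> X) = 2" "card (e' \<inter> X) = 2" using ci[OF e] ci[OF e'] c c' by auto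
        hence "(e - X) \<inter> (e' - X) = {}" using g e e' ne unfolding goodX_def by blast
        thus False using w by blast
      qed
    qed
  qed
  show ?thesis unfolding goodX_def using p1 p2 by blast
qed

lemma greedy:
  assumes U: "uniform_hypergraph r V E" and Lin: "linear_hypergraph E"
    and PV: "\<And>i. i < k \<Longrightarrow> P i \<subseteq> V" and PL: "\<And>i. i < k \<Longrightarrow> Lb \<le> card (P i)"
    and Lb: "k * l + r * (k * l) * (k * l) + r * (k * l) * (r * (k * l) * (k * l)) < Lb"
  shows "\<exists>\<sigma>. inj_on \<sigma> ({0..<k} \<times> {0..<l}) \<and> (\<forall>x\<in>{0..<k} \<times> {0..<l}. \<sigma> x \<in> P (fst x))
           \<and> goodX E (\<sigma> ` ({0..<k} \<times> {0..<l}))"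
proof -
  define K where "K = k * l"
  define Dm where "Dm = {0..<k} \<times> {0..<l}"
  have cDm: "card Dm = K" unfolding Dm_def K_def by simp
  have finDm: "finite Dm" unfolding Dm_def by simp
  have "finite D \<Longrightarrow> D \<subseteq> Dm \<Longrightarrow> \<exists>\<sigma>. inj_on \<sigma> D \<and> (\<forall>x\<in>D. \<sigma> x \<in> P (fst x)) \<and> goodX E (\<sigma> ` D)" for D
  proof (induction D rule: finite_induct)
    case empty
    show ?case by (intro exI[of _ "\<lambda>_. 0"]) (simp add: goodX_def)
  next
    case (insert x D)
    then obtain \<sigma> where inj: "inj_on \<sigma> D" and inP: "\<forall>y\<in>D. \<sigma> y \<in> P (fst y)" and g: "goodX E (\<sigma> ` D)" by auto
    define X where "X = \<sigma> ` D"
    have finX: "finite X" unfolding X_def using insert by simp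
    have "card (insert x D) \<le> K" using card_mono[OF finDm insert(4)] cDm by simp
    hence cD: "card D < K" using insert by simp
    have cX: "card X \<le> K" unfolding X_def using cD card_image_le[OF insert(1), of \<sigma>] by simp
    have xk: "fst x < k" using insert(4) unfolding Dm_def by auto
    note B = CC_DD_bounds[OF U Lin finX]
    have "card (X \<union> hgCC E X \<union> hgDD E X) \<le> card X + card (hgCC E X) + card (hgDD E X)"
      by (meson card_Un_le add_le_mono order_trans le_refl)
    also have "\<dots> \<le> K + r * K * K + r * K * (r * K * K)"
    proof -
      have "r * card X * card X \<le> r * K * K" using cX by (simp add: mult_le_mono)
      moreover have "r * card X * (r * card X * card X) \<le> r * K * (r * K * K)" using cX by (simp add: mult_le_mono)
      ultimately show ?thesis using cX B(2) B(4) by linarith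
    qed
    also have "\<dots> < card (P (fst x))" using Lb PL[OF xk] unfolding K_def by linarith
    finally have lt: "card (X \<union> hgCC E X \<union> hgDD E X) < card (P (fst x))" .
    have "\<not> P (fst x) \<subseteq> X \<union> hgCC E X \<union> hgDD E X"
    proof
      assume "P (fst x) \<subseteq> X \<union> hgCC E X \<union> hgDD E X"
      moreover have "finite (X \<union> hgCC E X \<union> hgDD E X)" using finX B(1) B(3) by simp
      ultimately have "card (P (fst x)) \<le> card (X \<union> hgCC E X \<union> hgDD E X)" by (rule card_mono[rotated])
      thus False using lt by simp
    qed
    then obtain t where t: "t \<in> P (fst x)" "t \<notin> X" "t \<notin> hgCC E X" "t \<notin> hgDD E X" by blast
    define \<sigma>' where "\<sigma>' = \<sigma>(x := t)"
    have eqD: "\<And>y. y \<in> D \<Longrightarrow> \<sigma>' y = \<sigma> y" unfolding \<sigma>'_def using insert(2) by auto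
    have imD: "\<sigma>' ` D = X" unfolding X_def using eqD by (rule image_cong[OF refl])
    have im: "\<sigma>' ` insert x D = insert t X"
    proof -
      have "\<sigma>' ` insert x D = insert (\<sigma>' x) (\<sigma>' ` D)" by (rule image_insert)
      thus ?thesis using imD unfolding \<sigma>'_def by simp
    qed
    have "inj_on \<sigma>' D" using inj_on_cong[of D \<sigma>' \<sigma>] eqD inj by simp
    moreover have "\<sigma>' x \<notin> \<sigma>' ` D" using t eqD unfolding \<sigma>'_def X_def by auto
    ultimately have "inj_on \<sigma>' (insert x D)" using insert(2) by simp
    moreover have "\<forall>y\<in>insert x D. \<sigma>' y \<in> P (fst y)" using inP eqD t unfolding \<sigma>'_def by auto
    moreover have "goodX E (\<sigma>' ` insert x D)" unfolding im
      using good_insert[OF U Lin _ t(2-4)] g X_def by blast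
    ultimately show ?case by blast
  qed
  thus ?thesis using finDm unfolding Dm_def by blast
qed

lemma final_embed:
  assumes U: "uniform_hypergraph r V E" and Lin: "linear_hypergraph E" and r2: "r \<ge> 2"
    and inj: "inj_on \<sigma> ({0..<k} \<times> {0..<l})" and inP: "\<forall>x\<in>{0..<k} \<times> {0..<l}. \<sigma> x \<in> P (fst x)"
    and g: "goodX E (\<sigma> ` ({0..<k} \<times> {0..<l}))"
    and PV: "\<And>i. i < k \<Longrightarrow> P i \<subseteq> V"
    and cross: "\<And>i j u v. i < k \<Longrightarrow> j < k \<Longrightarrow> i \<noteq> j \<Longrightarrow> u \<in> P i \<Longrightarrow> v \<in> P j \<Longrightarrow> v \<in> shnb E u"
  shows "contains_hg V E (expansion_verts r (Kkl_verts k l) (Kkl_edges k l)) (expansion_edges r (Kkl_edges k l))"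
proof -
  define Dm where "Dm = {0..<k} \<times> {0..<l}"
  define X where "X = \<sigma> ` Dm"
  have Ec: "\<And>e. e \<in> E \<Longrightarrow> card e = r \<and> e \<subseteq> V" and finV: "finite V"
    using U unfolding uniform_hypergraph_def by auto
  have finE: "\<And>e. e \<in> E \<Longrightarrow> finite e" using Ec finV finite_subset by blast
  have finX: "finite X" unfolding X_def Dm_def by simp
  have gX: "goodX E X" using g unfolding X_def Dm_def .
  have g1: "\<forall>e\<in>E. card (e \<inter> X) \<le> 2" using gX unfolding goodX_def by blast
  have g2: "\<forall>e\<in>E. \<forall>e'\<in>E. e \<noteq> e' \<longrightarrow> card (e \<inter> X) = 2 \<longrightarrow> card (e' \<inter> X) = 2 \<longrightarrow> (e - X) \<inter> (e' - X) = {}"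
    using gX unfolding goodX_def by blast
  define hyp where "hyp ge = (SOME e. e \<in> E \<and> \<sigma> ` ge \<subseteq> e)" for ge :: "(nat \<times> nat) set"
  define ol where "ol ge = sorted_list_of_set (hyp ge - X)" for ge
  have KE: "\<exists>i a j b. ge = {(i, a), (j, b)} \<and> i < k \<and> j < k \<and> a < l \<and> b < l \<and> i \<noteq> j"
    if "ge \<in> Kkl_edges k l" for ge using that unfolding Kkl_edges_def by blast
  have props: "hyp ge \<in> E \<and> \<sigma> ` ge \<subseteq> hyp ge \<and> \<sigma> ` ge \<subseteq> X \<and> hyp ge \<inter> X = \<sigma> ` ge \<and> card (hyp ge \<inter> X) = 2
      \<and> ge \<subseteq> Dm \<and> card (hyp ge - X) = r - 2"
    if ge: "ge \<in> Kkl_edges k l" for ge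
  proof -
    obtain i a j b where ij: "ge = {(i, a), (j, b)}" "i < k" "j < k" "a < l" "b < l" "i \<noteq> j"
      using KE[OF ge] by blast
    have geD: "ge \<subseteq> Dm" unfolding Dm_def using ij by auto
    have m1: "\<sigma> (i, a) \<in> P i" using bspec[OF inP, of "(i, a)"] ij by simp
    have m2: "\<sigma> (j, b) \<in> P j" using bspec[OF inP, of "(j, b)"] ij by simp
    have "\<sigma> (j, b) \<in> shnb E (\<sigma> (i, a))" by (rule cross[OF ij(2,3,6) m1 m2])
    hence "\<exists>e. e \<in> E \<and> \<sigma> ` ge \<subseteq> e" unfolding shnb_def ij(1) by auto
    hence h1: "hyp ge \<in> E \<and> \<sigma> ` ge \<subseteq> hyp ge" unfolding hyp_def by (rule someI_ex)
    have sX: "\<sigma> ` ge \<subseteq> X" unfolding X_def using geD by blast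
    have "(i, a) \<noteq> (j, b)" using ij by simp
    moreover have "(i, a) \<in> {0..<k} \<times> {0..<l}" "(j, b) \<in> {0..<k} \<times> {0..<l}" using ij by auto
    ultimately have "\<sigma> (i, a) \<noteq> \<sigma> (j, b)" using inj by (simp add: inj_on_eq_iff)
    hence c2: "card (\<sigma> ` ge) = 2" unfolding ij(1) by simp
    have sub: "\<sigma> ` ge \<subseteq> hyp ge \<inter> X" using h1 sX by blast
    have "card (hyp ge \<inter> X) \<le> 2" using g1 h1 by blast
    hence eq0: "\<sigma> ` ge = hyp ge \<inter> X"
      using finX c2 by (intro card_seteq[OF _ sub]) auto
    hence eq: "hyp ge \<inter> X = \<sigma> ` ge" by simp
    have "card (hyp ge - X) = card (hyp ge) - card (hyp ge \<inter> X)"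
      using finX by (simp add: card_Diff_subset_Int)
    moreover have "card (hyp ge) = r" using Ec h1 by blast
    ultimately have "card (hyp ge - X) = r - 2" using eq c2 by simp
    thus ?thesis using h1 sX eq c2 geD by simp
  qed
  have olp: "distinct (ol ge) \<and> set (ol ge) = hyp ge - X \<and> length (ol ge) = r - 2" if "ge \<in> Kkl_edges k l" for ge
  proof -
    have hE: "hyp ge \<in> E" using props[OF that] by blast
    have fin: "finite (hyp ge - X)" using finE[OF hE] by blast
    have c: "card (hyp ge - X) = r - 2" using props[OF that] by blast
    have "distinct (ol ge)" unfolding ol_def by simp
    moreover have "set (ol ge) = hyp ge - X" unfolding ol_def using fin by simp
    moreover have "length (ol ge) = r - 2" unfolding ol_def using c by simp
    ultimately show ?thesis by blast
  qed
  have hyp_inj: "hyp ge \<noteq> hyp ge'" if "ge \<in> Kkl_edges k l" "ge' \<in> Kkl_edges k l" "ge \<noteq> ge'" for ge ge'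
  proof
    assume "hyp ge = hyp ge'"
    moreover have "hyp ge \<inter> X = \<sigma> ` ge" "hyp ge' \<inter> X = \<sigma> ` ge'" using props[OF that(1)] props[OF that(2)] by auto
    ultimately have "\<sigma> ` ge = \<sigma> ` ge'" by simp
    moreover have "ge \<subseteq> {0..<k} \<times> {0..<l}" "ge' \<subseteq> {0..<k} \<times> {0..<l}"
      using props[OF that(1)] props[OF that(2)] unfolding Dm_def by auto
    ultimately have "ge = ge'" using inj_on_image_eq_iff[OF inj] by blast
    thus False using that by simp
  qed
  define f where "f z = (case z of Inl p \<Rightarrow> \<sigma> p | Inr (ge, t) \<Rightarrow> ol ge ! t)" for z
  have fInr: "f (Inr (ge, t)) \<in> hyp ge - X" if "ge \<in> Kkl_edges k l" "t < r - 2" for ge t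
  proof -
    have "f (Inr (ge, t)) = ol ge ! t" unfolding f_def by simp
    moreover have "ol ge ! t \<in> set (ol ge)" using olp[OF that(1)] that(2) by (intro nth_mem) simp
    ultimately show ?thesis using olp[OF that(1)] by simp
  qed
  show ?thesis
    unfolding contains_hg_def
  proof (intro exI[of _ f] conjI)
    show "inj_on f (expansion_verts r (Kkl_verts k l) (Kkl_edges k l))"
    proof (rule inj_onI)
      fix z z' assume z: "z \<in> expansion_verts r (Kkl_verts k l) (Kkl_edges k l)"
        and z': "z' \<in> expansion_verts r (Kkl_verts k l) (Kkl_edges k l)" and fz: "f z = f z'"
      show "z = z'"
      proof (cases z)
        case (Inl p)
        hence pD: "p \<in> Dm" using z unfolding expansion_verts_def Kkl_verts_def Dm_def by auto
        show ?thesis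
        proof (cases z')
          case (Inl p')
          hence "p' \<in> Dm" using z' unfolding expansion_verts_def Kkl_verts_def Dm_def by auto
          thus ?thesis using fz Inl \<open>z = Inl p\<close> pD inj unfolding f_def Dm_def by (simp add: inj_on_eq_iff)
        next
          case (Inr q)
          then obtain ge t where q: "z' = Inr (ge, t)" "ge \<in> Kkl_edges k l" "t < r - 2"
            using z' unfolding expansion_verts_def by auto
          have "f z' \<notin> X" using fInr[OF q(2,3)] q(1) by simp
          moreover have "f z \<in> X" using Inl pD unfolding f_def X_def by simp
          ultimately show ?thesis using fz by simp
        qed
      next
        case (Inr q)
        then obtain ge t where q: "z = Inr (ge, t)" "ge \<in> Kkl_edges k l" "t < r - 2"
          using z unfolding expansion_verts_def by auto
        show ?thesis
        proof (cases z')
          case (Inl p')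
          hence "p' \<in> Dm" using z' unfolding expansion_verts_def Kkl_verts_def Dm_def by auto
          hence "f z' \<in> X" using Inl unfolding f_def X_def by simp
          moreover have "f z \<notin> X" using fInr[OF q(2,3)] q(1) by simp
          ultimately show ?thesis using fz by simp
        next
          case (Inr q')
          then obtain ge' t' where q': "z' = Inr (ge', t')" "ge' \<in> Kkl_edges k l" "t' < r - 2"
            using z' unfolding expansion_verts_def by auto
          show ?thesis
          proof (cases "ge = ge'")
            case True
            hence "ol ge ! t = ol ge ! t'" using fz q q' unfolding f_def by simp
            hence "t = t'" using olp[OF q(2)] q(3) q'(3) by (simp add: nth_eq_iff_index_eq)
            thus ?thesis using q q' True by simp
          next
            case False
            have c1: "card (hyp ge \<inter> X) = 2" using props[OF q(2)] by blast
            have c2: "card (hyp ge' \<inter> X) = 2" using props[OF q'(2)] by blast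
            have hE: "hyp ge \<in> E" "hyp ge' \<in> E" using props[OF q(2)] props[OF q'(2)] by auto
            have "(hyp ge - X) \<inter> (hyp ge' - X) = {}"
              by (rule g2[rule_format, OF hE(1) hE(2) hyp_inj[OF q(2) q'(2) False] c1 c2])
            thus ?thesis using fInr[OF q(2,3)] fInr[OF q'(2,3)] fz q(1) q'(1) by auto
          qed
        qed
      qed
    qed
    show "f ` expansion_verts r (Kkl_verts k l) (Kkl_edges k l) \<subseteq> V"
    proof
      fix y assume "y \<in> f ` expansion_verts r (Kkl_verts k l) (Kkl_edges k l)"
      then obtain z where z: "z \<in> expansion_verts r (Kkl_verts k l) (Kkl_edges k l)" "y = f z" by blast
      show "y \<in> V"
      proof (cases z)
        case (Inl p)
        hence "p \<in> Dm" using z unfolding expansion_verts_def Kkl_verts_def Dm_def by auto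
        hence "\<sigma> p \<in> P (fst p)" "fst p < k" using inP unfolding Dm_def by auto
        thus ?thesis using z Inl PV unfolding f_def by auto
      next
        case (Inr q)
        then obtain ge t where q: "z = Inr (ge, t)" "ge \<in> Kkl_edges k l" "t < r - 2"
          using z unfolding expansion_verts_def by auto
        have "hyp ge \<in> E" using props[OF q(2)] by blast
        hence "hyp ge \<subseteq> V" using Ec by blast
        thus ?thesis using fInr[OF q(2,3)] q(1) z(2) by blast
      qed
    qed
    show "\<forall>e\<in>expansion_edges r (Kkl_edges k l). f ` e \<in> E"
    proof
      fix e assume "e \<in> expansion_edges r (Kkl_edges k l)"
      then obtain ge where ge: "ge \<in> Kkl_edges k l" and e: "e = Inl ` ge \<union> {Inr (ge, j) | j. j < r - 2}"
        unfolding expansion_edges_def by blast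
      have e2: "{Inr (ge, j) | j. j < r - 2} = (\<lambda>j. Inr (ge, j)) ` {..<r - 2}" by auto
      have "f ` e = f ` (Inl ` ge) \<union> f ` ((\<lambda>j. Inr (ge, j)) ` {..<r - 2})" unfolding e e2 by (rule image_Un)
      also have "f ` (Inl ` ge) = \<sigma> ` ge" by (simp add: image_image f_def)
      also have "f ` ((\<lambda>j. Inr (ge, j)) ` {..<r - 2}) = (\<lambda>j. ol ge ! j) ` {..<r - 2}" by (simp add: image_image f_def)
      also have "(\<lambda>j. ol ge ! j) ` {..<r - 2} = set (ol ge)"
      proof -
        have "length (ol ge) = r - 2" using olp[OF ge] by blast
        thus ?thesis by (auto simp: set_conv_nth)
      qed
      also have "\<sigma> ` ge \<union> set (ol ge) = hyp ge" using props[OF ge] olp[OF ge] by blast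
      finally show "f ` e \<in> E" using props[OF ge] by simp
    qed
  qed
qed

lemma sup_degenerate:
  fixes X :: "real set"
  assumes "X = {} \<or> \<not> bdd_above X"
  shows "Sup X = (THE x::real. False)"
proof -
  have "(\<lambda>z. (\<forall>x\<in>X. x \<le> z) \<and> (\<forall>y. (\<forall>x\<in>X. x \<le> y) \<longrightarrow> z \<le> y)) = (\<lambda>z. False)"
  proof (rule ext)
    fix z :: real
    show "((\<forall>x\<in>X. x \<le> z) \<and> (\<forall>y. (\<forall>x\<in>X. x \<le> y) \<longrightarrow> z \<le> y)) = False"
    proof (cases "X = {}")
      case True
      have "\<not> z \<le> z - 1" by simp
      thus ?thesis using True by blast
    next
      case False
      hence "\<not> bdd_above X" using assms by blast
      hence "\<not> (\<forall>x\<in>X. x \<le> z)" unfolding bdd_above_def by blast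
      thus ?thesis by blast
    qed
  qed
  thus ?thesis unfolding Sup_real_def Least_def by simp
qed

theorem lemma1p5:
  fixes k l r :: nat and c :: real
  assumes "k \<ge> 3" and "l \<ge> 2" and "r \<ge> 2" and "c > 0"
  shows "\<exists>n0::nat. \<forall>(V::nat set) (E::nat set set).
           uniform_hypergraph r V E \<and> linear_hypergraph E \<and> card V \<ge> n0 \<and>
           spectral_radius_hg r V E \<ge>
             real (card V) / real (r - 1) * (1 - 1 / real (k - 1) + c)
           \<longrightarrow> contains_hg V E (expansion_verts r (Kkl_verts k l) (Kkl_edges k l))
                               (expansion_edges r (Kkl_edges k l))"
proof -
  have k3: "k \<ge> 3" and r2: "r \<ge> 2" and cpos: "c > 0" using assms by auto
  define \<alpha> where "\<alpha> = 1 - 1 / real (k - 1)"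
  have al: "\<alpha> \<ge> 1 / 2" "\<alpha> < 1"
  proof -
    have "real (k - 1) \<ge> 2" using k3 by simp
    hence "1 / real (k - 1) \<le> 1 / 2" by (simp add: field_simps)
    thus "\<alpha> \<ge> 1 / 2" unfolding \<alpha>_def by simp
    show "\<alpha> < 1" unfolding \<alpha>_def using k3 by simp
  qed
  define K where "K = k * l"
  define Lb where "Lb = K + r * K * K + r * K * (r * K * K) + 1"
  have W: "wes_prop (k - 1)" by (rule wes_all)
  have c8: "c / 8 > 0" using cpos by simp
  have ex0: "\<exists>\<eta>>0. \<forall>S N (q::nat\<Rightarrow>real). finite S \<longrightarrow>
      (\<forall>v\<in>S. N v \<subseteq> S \<and> v \<notin> N v) \<longrightarrow> (\<forall>u\<in>S. \<forall>v\<in>S. v \<in> N u \<longrightarrow> u \<in> N v) \<longrightarrow>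
      (\<forall>v\<in>S. 0 \<le> q v \<and> q v \<le> \<eta>) \<longrightarrow> sum q S = 1 \<longrightarrow>
      (k - 1 = 0 \<or> (\<forall>v\<in>S. 1 - 1 / real (k - 1) + c / 8 \<le> sum q (N v))) \<longrightarrow>
      (\<exists>P. multip S N (Suc (k - 1)) Lb P)"
    using mp[OF spec[OF W[unfolded wes_prop_def], of "c / 8"] c8, THEN spec[of _ Lb]] .
  then obtain \<eta> where eta: "\<eta> > 0" and Hw: "\<forall>S N (q::nat\<Rightarrow>real). finite S \<longrightarrow>
      (\<forall>v\<in>S. N v \<subseteq> S \<and> v \<notin> N v) \<longrightarrow> (\<forall>u\<in>S. \<forall>v\<in>S. v \<in> N u \<longrightarrow> u \<in> N v) \<longrightarrow>
      (\<forall>v\<in>S. 0 \<le> q v \<and> q v \<le> \<eta>) \<longrightarrow> sum q S = 1 \<longrightarrow>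
      (k - 1 = 0 \<or> (\<forall>v\<in>S. 1 - 1 / real (k - 1) + c / 8 \<le> sum q (N v))) \<longrightarrow>
      (\<exists>P. multip S N (Suc (k - 1)) Lb P)"
    by blast
  define \<gamma> where "\<gamma> = \<alpha> + c / 4"
  define \<delta> where "\<delta> = c / 4"
  have gpos: "\<gamma> > 0" unfolding \<gamma>_def using al cpos by simp
  have dpos: "\<delta> > 0" unfolding \<delta>_def using cpos by simp
  define \<theta> where "\<theta> = min \<eta> (c / (8 * \<gamma>))"
  have thpos: "\<theta> > 0" unfolding \<theta>_def using eta cpos gpos by simp
  have th1: "\<theta> \<le> \<eta>" unfolding \<theta>_def by simp
  have th2: "\<gamma> * \<theta> \<le> c / 8"
  proof -
    have "\<theta> \<le> c / (8 * \<gamma>)" unfolding \<theta>_def by simp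
    hence "\<gamma> * \<theta> \<le> \<gamma> * (c / (8 * \<gamma>))" by (rule mult_left_mono) (use gpos in simp)
    also have "\<dots> = c / 8" using gpos by simp
    finally show ?thesis .
  qed
  define s0 where "s0 = (THE x::real. False)"
  define B0 where "B0 = \<bar>s0\<bar> * real (r - 1) / (\<alpha> + c) + 2 * real (r - 1) / c + 2 / (\<theta> * sqrt \<delta>) + 1"
  have sdpos: "sqrt \<delta> > 0" using dpos by simp
  have B0parts: "B0 \<ge> \<bar>s0\<bar> * real (r - 1) / (\<alpha> + c) + 1" "B0 \<ge> 2 * real (r - 1) / c" "B0 \<ge> 2 / (\<theta> * sqrt \<delta>)" "B0 \<ge> 1"
  proof -
    have a: "\<bar>s0\<bar> * real (r - 1) / (\<alpha> + c) \<ge> 0" using al cpos by simp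
    have b: "2 * real (r - 1) / c \<ge> 0" using cpos by simp
    have d: "2 / (\<theta> * sqrt \<delta>) \<ge> 0" using thpos sdpos by simp
    show "B0 \<ge> \<bar>s0\<bar> * real (r - 1) / (\<alpha> + c) + 1" "B0 \<ge> 2 * real (r - 1) / c" "B0 \<ge> 2 / (\<theta> * sqrt \<delta>)" "B0 \<ge> 1"
      unfolding B0_def using a b d by linarith+
  qed
  show ?thesis
  proof (intro exI[of _ "nat \<lceil>B0\<rceil>"] allI impI)
    fix V :: "nat set" and E :: "nat set set"
    assume H: "uniform_hypergraph r V E \<and> linear_hypergraph E \<and> card V \<ge> nat \<lceil>B0\<rceil> \<and>
           spectral_radius_hg r V E \<ge> real (card V) / real (r - 1) * (1 - 1 / real (k - 1) + c)"
    have U: "uniform_hypergraph r V E" and Lin: "linear_hypergraph E" using H by auto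
    define n where "n = card V"
    have nB: "real n \<ge> B0" using H unfolding n_def by linarith
    have finV: "finite V" using U unfolding uniform_hypergraph_def by simp
    have r1: "real (r - 1) > 0" using r2 by simp
    define thr where "thr = real n / real (r - 1) * (\<alpha> + c)"
    have thrle: "thr \<le> spectral_radius_hg r V E" using H unfolding thr_def n_def \<alpha>_def by simp
    have acpos: "\<alpha> + c > 0" using al cpos by simp
    define X where "X = {cmod lam | lam. tensor_eigenvalue r V E lam}"
    have "\<exists>lam. tensor_eigenvalue r V E lam \<and> cmod lam > thr - 1"
    proof (cases "X = {} \<or> \<not> bdd_above X")
      case True
      hence "spectral_radius_hg r V E = s0" unfolding spectral_radius_hg_def s0_def
        using sup_degenerate[OF True] X_def by simp
      hence "thr \<le> s0" using thrle by simp
      moreover have "thr > s0"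
      proof -
        have "real n \<ge> \<bar>s0\<bar> * real (r - 1) / (\<alpha> + c) + 1" using nB B0parts by linarith
        hence "real n * (\<alpha> + c) \<ge> \<bar>s0\<bar> * real (r - 1) + (\<alpha> + c)" using acpos
          by (simp add: field_simps)
        hence "real n * (\<alpha> + c) > \<bar>s0\<bar> * real (r - 1)" using acpos by linarith
        hence "real n * (\<alpha> + c) / real (r - 1) > \<bar>s0\<bar>" using r1 by (simp add: field_simps)
        moreover have "real n * (\<alpha> + c) / real (r - 1) = thr" unfolding thr_def by simp
        ultimately have "\<bar>s0\<bar> < thr" by simp
        thus ?thesis using abs_ge_self[of s0] by linarith
      qed
      ultimately show ?thesis by simp
    next
      case False
      hence "thr - 1 < Sup X" using thrle unfolding spectral_radius_hg_def X_def by simp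
      then obtain x where "x \<in> X" "thr - 1 < x" using less_cSup_iff False by blast
      thus ?thesis unfolding X_def by blast
    qed
    then obtain lam where ev: "tensor_eigenvalue r V E lam" and lamb: "cmod lam > thr - 1" by blast
    obtain w where wnn: "\<forall>i. 0 \<le> w i" and wpos: "\<exists>i\<in>V. w i > 0"
      and wineq: "\<forall>i\<in>V. real (r - 1) * cmod lam * w i \<le> sum w (shnb E i)"
      using spec_to_graph[OF U Lin r2 ev] by blast
    define \<mu> where "\<mu> = real (r - 1) * cmod lam"
    have npos: "real n \<ge> 1" using nB B0parts by linarith
    have mub: "\<mu> \<ge> real n * (\<alpha> + c / 2)"
    proof -
      have "\<mu> > real (r - 1) * (thr - 1)" unfolding \<mu>_def using lamb r1 by simp
      also have "real (r - 1) * (thr - 1) = real n * (\<alpha> + c) - real (r - 1)"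
        unfolding thr_def using r1 by (simp add: field_simps)
      finally have m1: "\<mu> > real n * (\<alpha> + c) - real (r - 1)" .
      have "real n \<ge> 2 * real (r - 1) / c" using nB B0parts by linarith
      hence "real n * c \<ge> 2 * real (r - 1)" using cpos by (simp add: field_simps)
      thus ?thesis using m1 by (simp add: algebra_simps)
    qed
    have mupos: "\<mu> > 0"
    proof -
      have "real n * (\<alpha> + c / 2) > 0" using npos al cpos by simp
      thus ?thesis using mub by linarith
    qed
    have shV: "\<And>v. shnb E v \<subseteq> V" using U unfolding shnb_def uniform_hypergraph_def by blast
    have shsym: "\<And>a b. a \<in> shnb E b \<longleftrightarrow> b \<in> shnb E a" unfolding shnb_def by blast
    have shirr: "\<And>a. a \<notin> shnb E a" unfolding shnb_def by blast
    have gd: "\<mu> / real (card V) - \<gamma> \<ge> \<delta>"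
    proof -
      have "\<mu> / real n \<ge> \<alpha> + c / 2" using mub npos by (simp add: field_simps)
      hence "\<mu> / real (card V) \<ge> \<alpha> + c / 2" unfolding n_def .
      thus ?thesis unfolding \<gamma>_def \<delta>_def by linarith
    qed
    obtain S q where SV: "S \<subseteq> V" and sq: "sum q S = 1" and qb: "\<forall>v\<in>S. 0 \<le> q v \<and> q v \<le> 1 / (\<mu> * sqrt \<delta>)"
      and qdeg: "\<forall>v\<in>S. \<gamma> - \<gamma> * q v \<le> sum q (shnb E v \<inter> S)"
    proof -
      have wnn': "\<And>i. 0 \<le> w i" using wnn by blast
      have wineq': "\<And>i. i \<in> V \<Longrightarrow> \<mu> * w i \<le> sum w (shnb E i)" using wineq unfolding \<mu>_def by blast
      have g0: "\<gamma> \<ge> 0" using gpos by simp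
      show ?thesis using dense_sub[OF finV shV shsym shirr wnn' wpos mupos wineq' g0 dpos gd] that by blast
    qed
    have qth: "1 / (\<mu> * sqrt \<delta>) \<le> \<theta>"
    proof -
      have "real n \<ge> 2 / (\<theta> * sqrt \<delta>)" using nB B0parts by linarith
      hence "real n * (\<theta> * sqrt \<delta>) \<ge> 2" using thpos sdpos by (simp add: field_simps)
      moreover have "\<mu> \<ge> real n / 2"
      proof -
        have "real n * (1 / 2) \<le> real n * (\<alpha> + c / 2)" using al cpos npos by (intro mult_left_mono) auto
        thus ?thesis using mub by linarith
      qed
      hence "\<mu> * (\<theta> * sqrt \<delta>) \<ge> real n / 2 * (\<theta> * sqrt \<delta>)" using thpos sdpos by (simp add: mult_right_mono)
      ultimately have "\<mu> * (\<theta> * sqrt \<delta>) \<ge> 1" by linarith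
      hence "1 \<le> \<theta> * (\<mu> * sqrt \<delta>)" by (simp add: algebra_simps)
      thus ?thesis using mupos sdpos by (simp add: field_simps)
    qed
    define N' where "N' v = shnb E v \<inter> S" for v
    have finS: "finite S" using SV finV finite_subset by blast
    have "\<exists>P. multip S N' (Suc (k - 1)) Lb P"
    proof (rule Hw[rule_format])
      show "finite S" by (rule finS)
      show "\<And>v. v \<in> S \<Longrightarrow> N' v \<subseteq> S \<and> v \<notin> N' v" unfolding N'_def using shirr by blast
      show "\<And>u v. u \<in> S \<Longrightarrow> v \<in> S \<Longrightarrow> v \<in> N' u \<Longrightarrow> u \<in> N' v" unfolding N'_def using shsym by blast
      show "\<And>v. v \<in> S \<Longrightarrow> 0 \<le> q v \<and> q v \<le> \<eta>" using qb qth th1 by fastforce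
      show "sum q S = 1" by (rule sq)
      show "k - 1 = 0 \<or> (\<forall>v\<in>S. 1 - 1 / real (k - 1) + c / 8 \<le> sum q (N' v))"
      proof (rule disjI2, intro ballI)
        fix v assume vS: "v \<in> S"
        have "q v \<le> \<theta>" using qb qth vS by fastforce
        hence "\<gamma> * q v \<le> \<gamma> * \<theta>" using gpos by (simp add: mult_left_mono)
        hence "\<gamma> * q v \<le> c / 8" using th2 by linarith
        thus "1 - 1 / real (k - 1) + c / 8 \<le> sum q (N' v)"
          using qdeg vS unfolding N'_def \<gamma>_def \<alpha>_def by force
      qed
    qed
    then obtain P where P: "multip S N' k Lb P" using k3 by (metis Suc_diff_1 less_le_trans zero_less_numeral)
    have PV: "\<And>i. i < k \<Longrightarrow> P i \<subseteq> V" using P SV unfolding multip_def by blast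
    have PL: "\<And>i. i < k \<Longrightarrow> Lb \<le> card (P i)" using P unfolding multip_def by blast
    have cross: "\<And>i j u v. i < k \<Longrightarrow> j < k \<Longrightarrow> i \<noteq> j \<Longrightarrow> u \<in> P i \<Longrightarrow> v \<in> P j \<Longrightarrow> v \<in> shnb E u"
      using P unfolding multip_def N'_def by blast
    have "k * l + r * (k * l) * (k * l) + r * (k * l) * (r * (k * l) * (k * l)) < Lb"
      unfolding Lb_def K_def by simp
    then obtain \<sigma> where inj: "inj_on \<sigma> ({0..<k} \<times> {0..<l})" and inP: "\<forall>x\<in>{0..<k} \<times> {0..<l}. \<sigma> x \<in> P (fst x)"
      and g: "goodX E (\<sigma> ` ({0..<k} \<times> {0..<l}))"
      using greedy[where k=k and P=P and Lb=Lb and l=l, OF U Lin PV PL] by blast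
    show "contains_hg V E (expansion_verts r (Kkl_verts k l) (Kkl_edges k l)) (expansion_edges r (Kkl_edges k l))"
      by (rule final_embed[OF U Lin r2 inj inP g PV cross])
  qed
qed

end
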